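(* Let $p$ be an odd prime, let $S=\{q_1,q_2,q_3\}$ be a set of three primes with $q_i\equiv 1 \pmod p$ and $q_i\not\equiv 1\pmod{p^2}$, and let $n<p$. Then the linking algebra $\mathfrak l_S$ fails to have Property $FM(n)$ if and only if $\ell_{ij}\ne0$ for all $i\ne j$ and $$\ell_{13}/c_1=-\ell_{23}/c_2,\quad \ell_{21}/c_2=-\ell_{31}/c_3,\quad \ell_{12}/c_1=-\ell_{32}/c_3.$$
   Context: For $i\ne j$, choose a primitive root $g_j$ modulo $q_j$; the linking number $\ell_{ij}\in\mathbb{F}_p$ is defined by $q_i\equiv g_j^{-\ell_{ij}}\pmod{q_j}$. Let $c_i=(q_i-1)/p \bmod p\in\mathbb{F}_p^*$. The linking algebra $\mathfrak l_S$ is the Lie algebra over $\mathbb{F}_p$ generated by $\xi_1,\xi_2,\xi_3$ subject to the relations $c_i\xi_i+\sum_{j\ne i}\ell_{ij}[\xi_i,\xi_j]=0$, $i=1,2,3$. A Lie algebra $\mathfrak g$ over a field $F$ has Property $FM(n)$ if every Lie algebra homomorphism $\mathfrak g\to\mathfrak{gl}_n(F)$ is zero. *)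

theory Defs
  imports "HOL-Number_Theory.Number_Theory"
          "Jordan_Normal_Form.Matrix"
          "Berlekamp_Zassenhaus.Finite_Field"
begin

text \<open>The field F_p is the type 'p mod_ring, where 'p :: prime_card and p = CARD('p).
  gl_n(F) is realised as the n x n matrices (carrier_mat n n) with the commutator bracket.\<close>

definition lie_br :: "'a::comm_ring mat \<Rightarrow> 'a mat \<Rightarrow> 'a mat" where
  "lie_br A B = A * B - B * A"

text \<open>The linking algebra l_S is the Lie algebra generated by xi_1, xi_2, xi_3 subject to
  c_i xi_i + sum_{j ~= i} l_ij [xi_i, xi_j] = 0.  By the universal property of a presentation,
  a Lie algebra homomorphism l_S -> gl_n(F) is the same as a triple (X 1, X 2, X 3) of n x n
  matrices (the images of the generators) satisfying the defining relations; the homomorphism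
  is zero iff all X i are zero.\<close>

definition linking_rel_holds ::
  "nat \<Rightarrow> (nat \<Rightarrow> 'a::field) \<Rightarrow> (nat \<Rightarrow> nat \<Rightarrow> 'a) \<Rightarrow> (nat \<Rightarrow> 'a mat) \<Rightarrow> bool" where
  "linking_rel_holds n c l X \<longleftrightarrow>
     (\<forall>i\<in>{1,2,3}. X i \<in> carrier_mat n n) \<and>
     c 1 \<cdot>\<^sub>m X 1 + l 1 2 \<cdot>\<^sub>m lie_br (X 1) (X 2) + l 1 3 \<cdot>\<^sub>m lie_br (X 1) (X 3) = 0\<^sub>m n n \<and>
     c 2 \<cdot>\<^sub>m X 2 + l 2 1 \<cdot>\<^sub>m lie_br (X 2) (X 1) + l 2 3 \<cdot>\<^sub>m lie_br (X 2) (X 3) = 0\<^sub>m n n \<and>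
     c 3 \<cdot>\<^sub>m X 3 + l 3 1 \<cdot>\<^sub>m lie_br (X 3) (X 1) + l 3 2 \<cdot>\<^sub>m lie_br (X 3) (X 2) = 0\<^sub>m n n"

definition linking_algebra_FM ::
  "nat \<Rightarrow> (nat \<Rightarrow> 'a::field) \<Rightarrow> (nat \<Rightarrow> nat \<Rightarrow> 'a) \<Rightarrow> bool" where
  "linking_algebra_FM n c l \<longleftrightarrow>
     (\<forall>X. linking_rel_holds n c l X \<longrightarrow> (\<forall>i\<in>{1,2,3}. X i = 0\<^sub>m n n))"

end

theory Submission
  imports Defs
begin

lemma lie_carrier[simp]: "X \<in> carrier_mat n n \<Longrightarrow> Y \<in> carrier_mat n n \<Longrightarrow> lie_br X Y \<in> carrier_mat n n"
  unfolding lie_br_def by (auto intro: minus_carrier_mat)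

lemma sum3_0:
  assumes h: "(x::'a::ab_group_add) + y + z = 0" shows "x = - y - z"
proof -
  have "x = (x + y + z) - y - z" by (simp add: algebra_simps)
  then show ?thesis using h by simp
qed

lemma lie_dims[simp]: "dim_row (lie_br X Y) = dim_row Y" "dim_col (lie_br X Y) = dim_col X"
  unfolding lie_br_def by simp_all

lemma lie_entry:
  assumes "X \<in> carrier_mat n n" "Y \<in> carrier_mat n n" "i < n" "j < n"
  shows "lie_br X Y $$ (i,j) = (\<Sum>k<n. X$$(i,k)*Y$$(k,j) - Y$$(i,k)*X$$(k,j))"
  using assms unfolding lie_br_def
  by (simp add: scalar_prod_def sum_subtractf lessThan_atLeast0)

lemma lie_antisym:
  assumes "X \<in> carrier_mat n n" "Y \<in> carrier_mat n n" "i < n" "j < n"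
  shows "lie_br X Y $$ (i,j) = - lie_br Y X $$ (i,j)"
  using assms unfolding lie_br_def by simp

lemma lie_self:
  assumes "X \<in> carrier_mat n n" "i < n" "j < n"
  shows "lie_br X X $$ (i,j) = 0"
  using assms unfolding lie_br_def by simp

lemma lie_lin_right:
  fixes X W Y1 Y2 Y3 :: "'a::comm_ring mat"
  assumes c: "X \<in> carrier_mat n n" "W \<in> carrier_mat n n" "Y1 \<in> carrier_mat n n"
     "Y2 \<in> carrier_mat n n" "Y3 \<in> carrier_mat n n"
  and h: "\<forall>k<n. \<forall>j<n. d * W$$(k,j) = b1*Y1$$(k,j) + b2*Y2$$(k,j) + b3*Y3$$(k,j)"
  and ij: "i < n" "j < n"
  shows "d * lie_br X W $$ (i,j) = b1 * lie_br X Y1 $$ (i,j) + b2 * lie_br X Y2 $$ (i,j) + b3 * lie_br X Y3 $$ (i,j)"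
proof -
  have "d * lie_br X W $$ (i,j) = (\<Sum>k<n. X$$(i,k)*(d*W$$(k,j)) - (d*W$$(i,k))*X$$(k,j))"
    unfolding lie_entry[OF c(1,2) ij] sum_distrib_left by (rule sum.cong, auto simp: algebra_simps)
  also have "\<dots> = (\<Sum>k<n. b1*(X$$(i,k)*Y1$$(k,j) - Y1$$(i,k)*X$$(k,j)) + b2*(X$$(i,k)*Y2$$(k,j) - Y2$$(i,k)*X$$(k,j))
       + b3*(X$$(i,k)*Y3$$(k,j) - Y3$$(i,k)*X$$(k,j)))"
    using h ij by (intro sum.cong) (auto simp: algebra_simps)
  also have "\<dots> = b1 * lie_br X Y1 $$ (i,j) + b2 * lie_br X Y2 $$ (i,j) + b3 * lie_br X Y3 $$ (i,j)"
    unfolding lie_entry[OF c(1,3) ij] lie_entry[OF c(1,4) ij] lie_entry[OF c(1,5) ij]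
    by (simp add: sum.distrib sum_distrib_left)
  finally show ?thesis .
qed

lemma lie_jacobi:
  fixes X Y Z :: "'a::comm_ring mat"
  assumes c: "X \<in> carrier_mat n n" "Y \<in> carrier_mat n n" "Z \<in> carrier_mat n n"
  and ij: "i < n" "j < n"
  shows "lie_br X (lie_br Y Z) $$ (i,j) + lie_br Y (lie_br Z X) $$ (i,j) + lie_br Z (lie_br X Y) $$ (i,j) = 0"
proof -
  have e: "lie_br A (lie_br B C) $$ (i,j) = (A*B*C)$$(i,j) - (A*C*B)$$(i,j) - (B*C*A)$$(i,j) + (C*B*A)$$(i,j)"
    if "A \<in> carrier_mat n n" "B \<in> carrier_mat n n" "C \<in> carrier_mat n n" for A B C :: "'a mat"
  proof -
    have m: "lie_br A (lie_br B C) = (A*B*C - A*C*B) - (B*C*A - C*B*A)"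
      unfolding lie_br_def using that
      by (simp add: mult_minus_distrib_mat[where nr=n and n=n and nc=n] minus_mult_distrib_mat[where nr=n and n=n and nc=n])
    show ?thesis unfolding m using that ij by simp
  qed
  show ?thesis using c by (simp add: e)
qed

lemma core:
  fixes U V W :: "'a::field mat"
  assumes cU: "U \<in> carrier_mat n n" and cV: "V \<in> carrier_mat n n" and cW: "W \<in> carrier_mat n n"
    and c1: "c1 \<noteq> 0" and c2: "c2 \<noteq> 0"
    and r1: "\<forall>i<n. \<forall>j<n. c1*U$$(i,j) + a*lie_br U V$$(i,j) + b*lie_br U W$$(i,j) = 0"
    and r2: "\<forall>i<n. \<forall>j<n. c2*V$$(i,j) + d*lie_br V U$$(i,j) + e*lie_br V W$$(i,j) = 0"
    and w: "\<forall>i<n. \<forall>j<n. W$$(i,j) = \<mu>*U$$(i,j) + \<nu>*V$$(i,j)"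
  shows "U = 0\<^sub>m n n \<and> V = 0\<^sub>m n n \<and> W = 0\<^sub>m n n"
proof -
  define A where "A = lie_br U V"
  have cA: "A \<in> carrier_mat n n" unfolding A_def using cU cV by simp
  have w': "\<forall>k<n. \<forall>j<n. 1 * W$$(k,j) = \<mu>*U$$(k,j) + \<nu>*V$$(k,j) + 0*U$$(k,j)" using w by simp
  have h1: "lie_br U W $$(i,j) = \<nu> * A$$(i,j)" if "i<n" "j<n" for i j
  proof -
    have "1 * lie_br U W $$(i,j) = \<mu> * lie_br U U $$(i,j) + \<nu> * lie_br U V $$(i,j) + 0 * lie_br U U $$(i,j)"
      by (rule lie_lin_right[OF cU cW cU cV cU w' that])
    then show ?thesis using lie_self[OF cU that] unfolding A_def by simp
  qed
  have h2: "lie_br V W $$(i,j) = - \<mu> * A$$(i,j)" if "i<n" "j<n" for i j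
  proof -
    have "1 * lie_br V W $$(i,j) = \<mu> * lie_br V U $$(i,j) + \<nu> * lie_br V V $$(i,j) + 0 * lie_br V U $$(i,j)"
      by (rule lie_lin_right[OF cV cW cU cV cU w' that])
    then show ?thesis using lie_self[OF cV that] lie_antisym[OF cV cU that] unfolding A_def by simp
  qed
  have hU: "c1 * U$$(i,j) = -(a + b*\<nu>) * A$$(i,j)" if "i<n" "j<n" for i j
  proof -
    have "c1*U$$(i,j) + a*A$$(i,j) + b*lie_br U W$$(i,j) = 0" using r1[rule_format, OF that] unfolding A_def .
    then have "c1*U$$(i,j) + a*A$$(i,j) + b*(\<nu>*A$$(i,j)) = 0" using h1[OF that] by simp
    then have "c1*U$$(i,j) = -(a*A$$(i,j)) - b*(\<nu>*A$$(i,j))" by (rule sum3_0)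
    then show ?thesis by (simp add: algebra_simps)
  qed
  have hV: "c2 * V$$(i,j) = (d + e*\<mu>) * A$$(i,j)" if "i<n" "j<n" for i j
  proof -
    have "c2*V$$(i,j) + d*lie_br V U$$(i,j) + e*lie_br V W$$(i,j) = 0" using r2[rule_format, OF that] .
    then have "c2*V$$(i,j) + d*(-A$$(i,j)) + e*(-\<mu>*A$$(i,j)) = 0"
      using h2[OF that] lie_antisym[OF cV cU that] unfolding A_def by simp
    then have "c2*V$$(i,j) = -(d*(-A$$(i,j))) - e*(-\<mu>*A$$(i,j))" by (rule sum3_0)
    then show ?thesis by (simp add: algebra_simps)
  qed
  have hAU: "lie_br A U $$(i,j) = 0" if "i<n" "j<n" for i j
  proof -
    have hu: "\<forall>k<n. \<forall>j<n. c1 * U$$(k,j) = (-(a + b*\<nu>))*A$$(k,j) + 0*A$$(k,j) + 0*A$$(k,j)"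
      using hU by simp
    have "c1 * lie_br A U $$(i,j) = (-(a + b*\<nu>)) * lie_br A A $$(i,j) + 0 * lie_br A A $$(i,j) + 0 * lie_br A A $$(i,j)"
      by (rule lie_lin_right[OF cA cU cA cA cA hu that])
    then show ?thesis using lie_self[OF cA that] c1 by simp
  qed
  have hA: "A $$ (i,j) = 0" if "i<n" "j<n" for i j
  proof -
    have hv: "\<forall>k<n. \<forall>j<n. c2 * V$$(k,j) = (d + e*\<mu>)*A$$(k,j) + 0*A$$(k,j) + 0*A$$(k,j)"
      using hV by simp
    have "c2 * lie_br U V $$(i,j) = (d + e*\<mu>) * lie_br U A $$(i,j) + 0 * lie_br U A $$(i,j) + 0 * lie_br U A $$(i,j)"
      by (rule lie_lin_right[OF cU cV cA cA cA hv that])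
    then show ?thesis using hAU[OF that] lie_antisym[OF cU cA that] c2 unfolding A_def by simp
  qed
  have u0: "U$$(i,j) = 0" if "i<n" "j<n" for i j using hU[OF that] hA[OF that] c1 by simp
  have v0: "V$$(i,j) = 0" if "i<n" "j<n" for i j using hV[OF that] hA[OF that] c2 by simp
  have w0: "W$$(i,j) = 0" if "i<n" "j<n" for i j using w that u0[OF that] v0[OF that] by simp
  show ?thesis using u0 v0 w0 cU cV cW by (auto intro!: eq_matI)
qed

lemma rel_entries:
  fixes X :: "nat \<Rightarrow> 'a::field mat"
  assumes "linking_rel_holds n c l X"
  shows "X 1 \<in> carrier_mat n n" "X 2 \<in> carrier_mat n n" "X 3 \<in> carrier_mat n n"
   "\<forall>i<n. \<forall>j<n. c 1 * X 1$$(i,j) + l 1 2 * lie_br (X 1) (X 2) $$(i,j) + l 1 3 * lie_br (X 1) (X 3) $$(i,j) = 0"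
   "\<forall>i<n. \<forall>j<n. c 2 * X 2$$(i,j) + l 2 1 * lie_br (X 2) (X 1) $$(i,j) + l 2 3 * lie_br (X 2) (X 3) $$(i,j) = 0"
   "\<forall>i<n. \<forall>j<n. c 3 * X 3$$(i,j) + l 3 1 * lie_br (X 3) (X 1) $$(i,j) + l 3 2 * lie_br (X 3) (X 2) $$(i,j) = 0"
proof -
  note d = assms[unfolded linking_rel_holds_def]
  show c: "X 1 \<in> carrier_mat n n" "X 2 \<in> carrier_mat n n" "X 3 \<in> carrier_mat n n" using d by auto
  show "\<forall>i<n. \<forall>j<n. c 1 * X 1$$(i,j) + l 1 2 * lie_br (X 1) (X 2) $$(i,j) + l 1 3 * lie_br (X 1) (X 3) $$(i,j) = 0"
  proof (intro allI impI)
    fix i j assume ij: "i<n" "j<n"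
    from d have E: "(c 1 \<cdot>\<^sub>m X 1 + l 1 2 \<cdot>\<^sub>m lie_br (X 1) (X 2) + l 1 3 \<cdot>\<^sub>m lie_br (X 1) (X 3)) = 0\<^sub>m n n" by blast
    then have "(c 1 \<cdot>\<^sub>m X 1 + l 1 2 \<cdot>\<^sub>m lie_br (X 1) (X 2) + l 1 3 \<cdot>\<^sub>m lie_br (X 1) (X 3)) $$ (i,j) = 0" using ij by simp
    then show "c 1 * X 1$$(i,j) + l 1 2 * lie_br (X 1) (X 2) $$(i,j) + l 1 3 * lie_br (X 1) (X 3) $$(i,j) = 0"
      using ij c carrier_matD[OF c(1)] carrier_matD[OF c(2)] carrier_matD[OF c(3)] by simp
  qed
  show "\<forall>i<n. \<forall>j<n. c 2 * X 2$$(i,j) + l 2 1 * lie_br (X 2) (X 1) $$(i,j) + l 2 3 * lie_br (X 2) (X 3) $$(i,j) = 0"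
  proof (intro allI impI)
    fix i j assume ij: "i<n" "j<n"
    from d have E: "(c 2 \<cdot>\<^sub>m X 2 + l 2 1 \<cdot>\<^sub>m lie_br (X 2) (X 1) + l 2 3 \<cdot>\<^sub>m lie_br (X 2) (X 3)) = 0\<^sub>m n n" by blast
    then have "(c 2 \<cdot>\<^sub>m X 2 + l 2 1 \<cdot>\<^sub>m lie_br (X 2) (X 1) + l 2 3 \<cdot>\<^sub>m lie_br (X 2) (X 3)) $$ (i,j) = 0" using ij by simp
    then show "c 2 * X 2$$(i,j) + l 2 1 * lie_br (X 2) (X 1) $$(i,j) + l 2 3 * lie_br (X 2) (X 3) $$(i,j) = 0"
      using ij c carrier_matD[OF c(1)] carrier_matD[OF c(2)] carrier_matD[OF c(3)] by simp
  qed
  show "\<forall>i<n. \<forall>j<n. c 3 * X 3$$(i,j) + l 3 1 * lie_br (X 3) (X 1) $$(i,j) + l 3 2 * lie_br (X 3) (X 2) $$(i,j) = 0"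
  proof (intro allI impI)
    fix i j assume ij: "i<n" "j<n"
    from d have E: "(c 3 \<cdot>\<^sub>m X 3 + l 3 1 \<cdot>\<^sub>m lie_br (X 3) (X 1) + l 3 2 \<cdot>\<^sub>m lie_br (X 3) (X 2)) = 0\<^sub>m n n" by blast
    then have "(c 3 \<cdot>\<^sub>m X 3 + l 3 1 \<cdot>\<^sub>m lie_br (X 3) (X 1) + l 3 2 \<cdot>\<^sub>m lie_br (X 3) (X 2)) $$ (i,j) = 0" using ij by simp
    then show "c 3 * X 3$$(i,j) + l 3 1 * lie_br (X 3) (X 1) $$(i,j) + l 3 2 * lie_br (X 3) (X 2) $$(i,j) = 0"
      using ij c carrier_matD[OF c(1)] carrier_matD[OF c(2)] carrier_matD[OF c(3)] by simp
  qed
qed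

lemma solve3:
  fixes k1 k2 k3 x1 x2 x3 :: "'a::field"
  assumes "k1*x1 + k2*x2 + k3*x3 = 0" "k3 \<noteq> 0"
  shows "x3 = (-k1/k3)*x1 + (-k2/k3)*x2"
proof -
  have "k3*x3 = - (k1*x1) - k2*x2" using sum3_0[of "k3*x3" "k1*x1" "k2*x2"] assms(1) by (simp add: ac_simps)
  then have "x3 = (- (k1*x1) - k2*x2) / k3" using assms(2) by (simp add: field_simps)
  then show ?thesis by (simp add: field_simps diff_divide_distrib)
qed

lemma dep_zero:
  fixes X :: "nat \<Rightarrow> 'a::field mat"
  assumes rel: "linking_rel_holds n c l X"
    and c: "c 1 \<noteq> 0" "c 2 \<noteq> 0" "c 3 \<noteq> 0"
    and k: "\<forall>i<n. \<forall>j<n. k1 * X 1$$(i,j) + k2 * X 2$$(i,j) + k3 * X 3$$(i,j) = 0"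
    and knz: "k1 \<noteq> 0 \<or> k2 \<noteq> 0 \<or> k3 \<noteq> 0"
  shows "X 1 = 0\<^sub>m n n \<and> X 2 = 0\<^sub>m n n \<and> X 3 = 0\<^sub>m n n"
proof -
  note R = rel_entries[OF rel]
  consider "k3 \<noteq> 0" | "k2 \<noteq> 0" | "k1 \<noteq> 0" using knz by blast
  then show ?thesis
  proof cases
    case 1
    have w: "\<forall>i<n. \<forall>j<n. X 3$$(i,j) = (-k1/k3)*X 1$$(i,j) + (-k2/k3)*X 2$$(i,j)"
    proof (intro allI impI)
      fix i j assume "i<n" "j<n"
      then have "k1 * X 1$$(i,j) + k2 * X 2$$(i,j) + k3 * X 3$$(i,j) = 0" using k by simp
      then show "X 3$$(i,j) = (-k1/k3)*X 1$$(i,j) + (-k2/k3)*X 2$$(i,j)" using 1 by (rule solve3)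
    qed
    show ?thesis using core[OF R(1,2,3) c(1,2) R(4) R(5) w] by auto
  next
    case 2
    have w: "\<forall>i<n. \<forall>j<n. X 2$$(i,j) = (-k1/k2)*X 1$$(i,j) + (-k3/k2)*X 3$$(i,j)"
    proof (intro allI impI)
      fix i j assume "i<n" "j<n"
      then have "k1 * X 1$$(i,j) + k3 * X 3$$(i,j) + k2 * X 2$$(i,j) = 0" using k by (simp add: ac_simps)
      then show "X 2$$(i,j) = (-k1/k2)*X 1$$(i,j) + (-k3/k2)*X 3$$(i,j)" using 2 by (rule solve3)
    qed
    have r1: "\<forall>i<n. \<forall>j<n. c 1 * X 1$$(i,j) + l 1 3 * lie_br (X 1) (X 3) $$(i,j) + l 1 2 * lie_br (X 1) (X 2) $$(i,j) = 0"
      using R(4) by (simp add: ac_simps)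
    have r2: "\<forall>i<n. \<forall>j<n. c 3 * X 3$$(i,j) + l 3 1 * lie_br (X 3) (X 1) $$(i,j) + l 3 2 * lie_br (X 3) (X 2) $$(i,j) = 0"
      using R(6) by simp
    show ?thesis using core[OF R(1,3,2) c(1,3) r1 r2 w] by auto
  next
    case 3
    have w: "\<forall>i<n. \<forall>j<n. X 1$$(i,j) = (-k2/k1)*X 2$$(i,j) + (-k3/k1)*X 3$$(i,j)"
    proof (intro allI impI)
      fix i j assume "i<n" "j<n"
      then have "k2 * X 2$$(i,j) + k3 * X 3$$(i,j) + k1 * X 1$$(i,j) = 0" using k by (simp add: ac_simps)
      then show "X 1$$(i,j) = (-k2/k1)*X 2$$(i,j) + (-k3/k1)*X 3$$(i,j)" using 3 by (rule solve3)
    qed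
    have r1: "\<forall>i<n. \<forall>j<n. c 2 * X 2$$(i,j) + l 2 3 * lie_br (X 2) (X 3) $$(i,j) + l 2 1 * lie_br (X 2) (X 1) $$(i,j) = 0"
      using R(5) by (simp add: ac_simps)
    have r2: "\<forall>i<n. \<forall>j<n. c 3 * X 3$$(i,j) + l 3 2 * lie_br (X 3) (X 2) $$(i,j) + l 3 1 * lie_br (X 3) (X 1) $$(i,j) = 0"
      using R(6) by (simp add: ac_simps)
    show ?thesis using core[OF R(2,3,1) c(2,3) r1 r2 w] by auto
  qed
qed

lemma adjABC:
  fixes c1 c2 c3 l12 l13 l21 l23 l31 l32 x1 x2 x3 a b cc :: "'a::field"
  assumes e1: "c1*x1 + l12*a - l13*cc = 0" and e2: "c2*x2 - l21*a + l23*b = 0"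
    and e3: "c3*x3 + l31*cc - l32*b = 0"
  shows "(l13*l21*l32 - l12*l23*l31)*a = l23*l31*c1*x1 + l13*l32*c2*x2 + l13*l23*c3*x3"
    "(l13*l21*l32 - l12*l23*l31)*b = l21*l31*c1*x1 + l12*l31*c2*x2 + l13*l21*c3*x3"
    "(l13*l21*l32 - l12*l23*l31)*cc = l21*l32*c1*x1 + l12*l32*c2*x2 + l12*l23*c3*x3"
proof -
  have s1: "c1*x1 = l13*cc - l12*a" using e1 by (simp add: algebra_simps eq_diff_eq)
  have s2: "c2*x2 = l21*a - l23*b" using e2 by (simp add: algebra_simps eq_diff_eq)
  have s3: "c3*x3 = l32*b - l31*cc" using e3 by (simp add: algebra_simps eq_diff_eq)
  have r1: "l23*l31*c1*x1 + l13*l32*c2*x2 + l13*l23*c3*x3 = l23*l31*(c1*x1) + l13*l32*(c2*x2) + l13*l23*(c3*x3)"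
    by (simp add: ac_simps)
  have r2: "l21*l31*c1*x1 + l12*l31*c2*x2 + l13*l21*c3*x3 = l21*l31*(c1*x1) + l12*l31*(c2*x2) + l13*l21*(c3*x3)"
    by (simp add: ac_simps)
  have r3: "l21*l32*c1*x1 + l12*l32*c2*x2 + l12*l23*c3*x3 = l21*l32*(c1*x1) + l12*l32*(c2*x2) + l12*l23*(c3*x3)"
    by (simp add: ac_simps)
  show "(l13*l21*l32 - l12*l23*l31)*a = l23*l31*c1*x1 + l13*l32*c2*x2 + l13*l23*c3*x3"
    unfolding r1 s1 s2 s3 by (simp add: algebra_simps)
  show "(l13*l21*l32 - l12*l23*l31)*b = l21*l31*c1*x1 + l12*l31*c2*x2 + l13*l21*c3*x3"
    unfolding r2 s1 s2 s3 by (simp add: algebra_simps)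
  show "(l13*l21*l32 - l12*l23*l31)*cc = l21*l32*c1*x1 + l12*l32*c2*x2 + l12*l23*c3*x3"
    unfolding r3 s1 s2 s3 by (simp add: algebra_simps)
qed

lemma kappa_dep:
  fixes c1 c2 c3 l12 l13 l21 l23 l31 l32 x1 x2 x3 a b cc j1 j2 j3 D :: "'a::field"
  assumes "D*a = l23*l31*c1*x1 + l13*l32*c2*x2 + l13*l23*c3*x3"
    "D*b = l21*l31*c1*x1 + l12*l31*c2*x2 + l13*l21*c3*x3"
    "D*cc = l21*l32*c1*x1 + l12*l32*c2*x2 + l12*l23*c3*x3"
    "j1*a + j2*b + j3*cc = 0"
  shows "(c1*(j1*l23*l31 + j2*l21*l31 + j3*l21*l32))*x1 + (c2*(j1*l13*l32 + j2*l12*l31 + j3*l12*l32))*x2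
       + (c3*(j1*l13*l23 + j2*l13*l21 + j3*l12*l23))*x3 = 0" (is "?L = 0")
proof -
  have "?L = j1*(l23*l31*c1*x1 + l13*l32*c2*x2 + l13*l23*c3*x3) + j2*(l21*l31*c1*x1 + l12*l31*c2*x2 + l13*l21*c3*x3)
     + j3*(l21*l32*c1*x1 + l12*l32*c2*x2 + l12*l23*c3*x3)" by (simp add: algebra_simps)
  also have "\<dots> = j1*(D*a) + j2*(D*b) + j3*(D*cc)" using assms(1-3) by simp
  also have "\<dots> = D*(j1*a + j2*b + j3*cc)" by (simp add: algebra_simps)
  finally show ?thesis using assms(4) by simp
qed

lemma kappa_nz:
  fixes l12 l13 l21 l23 l31 l32 j1 j2 j3 :: "'a::field"
  shows "(l13*l21*l32 - l12*l23*l31)*j1 = -l12*(j1*l23*l31 + j2*l21*l31 + j3*l21*l32) + l21*(j1*l13*l32 + j2*l12*l31 + j3*l12*l32)"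
    "(l13*l21*l32 - l12*l23*l31)*j2 = -l23*(j1*l13*l32 + j2*l12*l31 + j3*l12*l32) + l32*(j1*l13*l23 + j2*l13*l21 + j3*l12*l23)"
    "(l13*l21*l32 - l12*l23*l31)*j3 = l13*(j1*l23*l31 + j2*l21*l31 + j3*l21*l32) - l31*(j1*l13*l23 + j2*l13*l21 + j3*l12*l23)"
  by (simp_all add: algebra_simps)

lemma only_if:
  fixes X :: "nat \<Rightarrow> 'a::field mat"
  assumes rel: "linking_rel_holds n c l X" and c: "c 1 \<noteq> 0" "c 2 \<noteq> 0" "c 3 \<noteq> 0"
    and nz: "\<not> (X 1 = 0\<^sub>m n n \<and> X 2 = 0\<^sub>m n n \<and> X 3 = 0\<^sub>m n n)"
  shows "l 1 3*l 2 1*l 3 2 - l 1 2*l 2 3*l 3 1 \<noteq> 0 \<and> l 1 2*l 3 1*c 2 - l 2 1*l 3 2*c 1 = 0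
      \<and> l 1 2*l 2 3*c 3 - l 1 3*l 3 2*c 2 = 0 \<and> l 2 3*l 3 1*c 1 - l 1 3*l 2 1*c 3 = 0"
proof -
  note R = rel_entries[OF rel]
  define A where "A = lie_br (X 1) (X 2)"
  define B where "B = lie_br (X 2) (X 3)"
  define C where "C = lie_br (X 3) (X 1)"
  have cA: "A \<in> carrier_mat n n" and cB: "B \<in> carrier_mat n n" and cC: "C \<in> carrier_mat n n"
    unfolding A_def B_def C_def using R(1-3) by auto
  define D where "D = l 1 3*l 2 1*l 3 2 - l 1 2*l 2 3*l 3 1"
  define j1 where "j1 = l 1 2*l 3 1*c 2 - l 2 1*l 3 2*c 1"
  define j2 where "j2 = l 1 2*l 2 3*c 3 - l 1 3*l 3 2*c 2"
  define j3 where "j3 = l 2 3*l 3 1*c 1 - l 1 3*l 2 1*c 3"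
  have E: "c 1 * X 1$$(i,j) + l 1 2 * A$$(i,j) - l 1 3 * C$$(i,j) = 0"
     "c 2 * X 2$$(i,j) - l 2 1 * A$$(i,j) + l 2 3 * B$$(i,j) = 0"
     "c 3 * X 3$$(i,j) + l 3 1 * C$$(i,j) - l 3 2 * B$$(i,j) = 0" if "i<n" "j<n" for i j
    using R(4)[rule_format, OF that] R(5)[rule_format, OF that] R(6)[rule_format, OF that]
      lie_antisym[OF R(1) R(3) that] lie_antisym[OF R(2) R(1) that] lie_antisym[OF R(3) R(2) that]
    unfolding A_def B_def C_def by simp_all
  have H: "D*A$$(i,j) = l 2 3*l 3 1*c 1*X 1$$(i,j) + l 1 3*l 3 2*c 2*X 2$$(i,j) + l 1 3*l 2 3*c 3*X 3$$(i,j)"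
     "D*B$$(i,j) = l 2 1*l 3 1*c 1*X 1$$(i,j) + l 1 2*l 3 1*c 2*X 2$$(i,j) + l 1 3*l 2 1*c 3*X 3$$(i,j)"
     "D*C$$(i,j) = l 2 1*l 3 2*c 1*X 1$$(i,j) + l 1 2*l 3 2*c 2*X 2$$(i,j) + l 1 2*l 2 3*c 3*X 3$$(i,j)"
    if "i<n" "j<n" for i j
    using adjABC[OF E(1)[OF that] E(2)[OF that] E(3)[OF that]] unfolding D_def by auto
  have hA: "\<forall>k<n. \<forall>j<n. D * A$$(k,j) = (l 2 3*l 3 1*c 1)*X 1$$(k,j) + (l 1 3*l 3 2*c 2)*X 2$$(k,j) + (l 1 3*l 2 3*c 3)*X 3$$(k,j)"
    using H(1) by blast
  have hB: "\<forall>k<n. \<forall>j<n. D * B$$(k,j) = (l 2 1*l 3 1*c 1)*X 1$$(k,j) + (l 1 2*l 3 1*c 2)*X 2$$(k,j) + (l 1 3*l 2 1*c 3)*X 3$$(k,j)"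
    using H(2) by blast
  have hC: "\<forall>k<n. \<forall>j<n. D * C$$(k,j) = (l 2 1*l 3 2*c 1)*X 1$$(k,j) + (l 1 2*l 3 2*c 2)*X 2$$(k,j) + (l 1 2*l 2 3*c 3)*X 3$$(k,j)"
    using H(3) by blast
  have jac: "j1 * A$$(i,j) + j2 * B$$(i,j) + j3 * C$$(i,j) = 0" if "i<n" "j<n" for i j
  proof -
    have t1: "D * lie_br (X 1) B $$(i,j) = (l 2 1*l 3 1*c 1) * lie_br (X 1) (X 1) $$(i,j) + (l 1 2*l 3 1*c 2) * lie_br (X 1) (X 2) $$(i,j) + (l 1 3*l 2 1*c 3) * lie_br (X 1) (X 3) $$(i,j)"
      by (rule lie_lin_right[OF R(1) cB R(1) R(2) R(3) hB that])
    have t2: "D * lie_br (X 2) C $$(i,j) = (l 2 1*l 3 2*c 1) * lie_br (X 2) (X 1) $$(i,j) + (l 1 2*l 3 2*c 2) * lie_br (X 2) (X 2) $$(i,j) + (l 1 2*l 2 3*c 3) * lie_br (X 2) (X 3) $$(i,j)"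
      by (rule lie_lin_right[OF R(2) cC R(1) R(2) R(3) hC that])
    have t3: "D * lie_br (X 3) A $$(i,j) = (l 2 3*l 3 1*c 1) * lie_br (X 3) (X 1) $$(i,j) + (l 1 3*l 3 2*c 2) * lie_br (X 3) (X 2) $$(i,j) + (l 1 3*l 2 3*c 3) * lie_br (X 3) (X 3) $$(i,j)"
      by (rule lie_lin_right[OF R(3) cA R(1) R(2) R(3) hA that])
    have jb: "lie_br (X 1) B $$(i,j) + lie_br (X 2) C $$(i,j) + lie_br (X 3) A $$(i,j) = 0"
      using lie_jacobi[OF R(1) R(2) R(3) that] unfolding A_def B_def C_def .
    have s: "lie_br (X 1) (X 1) $$(i,j) = 0" "lie_br (X 2) (X 2) $$(i,j) = 0" "lie_br (X 3) (X 3) $$(i,j) = 0"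
      using lie_self[OF R(1) that] lie_self[OF R(2) that] lie_self[OF R(3) that] by auto
    have an: "lie_br (X 1) (X 3) $$(i,j) = - C$$(i,j)" "lie_br (X 2) (X 1) $$(i,j) = - A$$(i,j)"
        "lie_br (X 3) (X 2) $$(i,j) = - B$$(i,j)"
      using lie_antisym[OF R(1) R(3) that] lie_antisym[OF R(2) R(1) that] lie_antisym[OF R(3) R(2) that]
      unfolding A_def B_def C_def by auto
    have "j1 * A$$(i,j) + j2 * B$$(i,j) + j3 * C$$(i,j) =
        D * lie_br (X 1) B $$(i,j) + D * lie_br (X 2) C $$(i,j) + D * lie_br (X 3) A $$(i,j)"
      unfolding t1 t2 t3 s an unfolding A_def[symmetric] B_def[symmetric] C_def[symmetric] j1_def j2_def j3_def
      by (simp add: algebra_simps)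
    also have "\<dots> = D * (lie_br (X 1) B $$(i,j) + lie_br (X 2) C $$(i,j) + lie_br (X 3) A $$(i,j))"
      by (simp add: algebra_simps)
    also have "\<dots> = 0" using jb by simp
    finally show ?thesis .
  qed
  show ?thesis
  proof (rule ccontr)
    assume neg: "\<not> ?thesis"
    have zero: "X 1 = 0\<^sub>m n n \<and> X 2 = 0\<^sub>m n n \<and> X 3 = 0\<^sub>m n n"
    proof (cases "D = 0")
      case False
      with neg have jnz: "j1 \<noteq> 0 \<or> j2 \<noteq> 0 \<or> j3 \<noteq> 0" unfolding D_def j1_def j2_def j3_def by blast
      define m1 where "m1 = j1*l 2 3*l 3 1 + j2*l 2 1*l 3 1 + j3*l 2 1*l 3 2"
      define m2 where "m2 = j1*l 1 3*l 3 2 + j2*l 1 2*l 3 1 + j3*l 1 2*l 3 2"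
      define m3 where "m3 = j1*l 1 3*l 2 3 + j2*l 1 3*l 2 1 + j3*l 1 2*l 2 3"
      have dep: "\<forall>i<n. \<forall>j<n. (c 1 * m1) * X 1$$(i,j) + (c 2 * m2) * X 2$$(i,j) + (c 3 * m3) * X 3$$(i,j) = 0"
      proof (intro allI impI)
        fix i j assume ij: "i<n" "j<n"
        show "(c 1 * m1) * X 1$$(i,j) + (c 2 * m2) * X 2$$(i,j) + (c 3 * m3) * X 3$$(i,j) = 0"
          unfolding m1_def m2_def m3_def
          by (rule kappa_dep[OF H(1)[OF ij] H(2)[OF ij] H(3)[OF ij] jac[OF ij]])
      qed
      have "c 1 * m1 \<noteq> 0 \<or> c 2 * m2 \<noteq> 0 \<or> c 3 * m3 \<noteq> 0"
      proof (rule ccontr)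
        assume "\<not> ?thesis"
        then have "m1 = 0" "m2 = 0" "m3 = 0" using c by auto
        moreover have "D*j1 = -l 1 2*m1 + l 2 1*m2" "D*j2 = -l 2 3*m2 + l 3 2*m3" "D*j3 = l 1 3*m1 - l 3 1*m3"
          unfolding D_def m1_def m2_def m3_def by (rule kappa_nz(1), rule kappa_nz(2), rule kappa_nz(3))
        ultimately have "D*j1 = 0" "D*j2 = 0" "D*j3 = 0" by simp_all
        then show False using False jnz by simp
      qed
      then show ?thesis by (rule dep_zero[OF rel c dep])
    next
      case True
      have dA: "\<forall>i<n. \<forall>j<n. (l 2 3*l 3 1*c 1)*X 1$$(i,j) + (l 1 3*l 3 2*c 2)*X 2$$(i,j) + (l 1 3*l 2 3*c 3)*X 3$$(i,j) = 0"
        using hA True by simp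
      have dB: "\<forall>i<n. \<forall>j<n. (l 2 1*l 3 1*c 1)*X 1$$(i,j) + (l 1 2*l 3 1*c 2)*X 2$$(i,j) + (l 1 3*l 2 1*c 3)*X 3$$(i,j) = 0"
        using hB True by simp
      have dC: "\<forall>i<n. \<forall>j<n. (l 2 1*l 3 2*c 1)*X 1$$(i,j) + (l 1 2*l 3 2*c 2)*X 2$$(i,j) + (l 1 2*l 2 3*c 3)*X 3$$(i,j) = 0"
        using hC True by simp
      show ?thesis
      proof (cases "l 2 3*l 3 1*c 1 \<noteq> 0 \<or> l 1 3*l 3 2*c 2 \<noteq> 0 \<or> l 1 3*l 2 3*c 3 \<noteq> 0")
        case True then show ?thesis by (rule dep_zero[OF rel c dA])
      next
        case F1: False
        show ?thesis
        proof (cases "l 2 1*l 3 1*c 1 \<noteq> 0 \<or> l 1 2*l 3 1*c 2 \<noteq> 0 \<or> l 1 3*l 2 1*c 3 \<noteq> 0")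
          case True then show ?thesis by (rule dep_zero[OF rel c dB])
        next
          case F2: False
          show ?thesis
          proof (cases "l 2 1*l 3 2*c 1 \<noteq> 0 \<or> l 1 2*l 3 2*c 2 \<noteq> 0 \<or> l 1 2*l 2 3*c 3 \<noteq> 0")
            case True then show ?thesis by (rule dep_zero[OF rel c dC])
          next
            case F3: False
            from F1 F2 F3 c have rows: "(l 1 2 = 0 \<and> l 1 3 = 0) \<or> (l 2 1 = 0 \<and> l 2 3 = 0) \<or> (l 3 1 = 0 \<and> l 3 2 = 0)"
              by auto
            then show ?thesis
            proof (elim disjE conjE)
              assume z: "l 1 2 = 0" "l 1 3 = 0"
              have "\<forall>i<n. \<forall>j<n. c 1 * X 1$$(i,j) + 0 * X 2$$(i,j) + 0 * X 3$$(i,j) = 0"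
                using E(1) z by simp
              note d = this
              show ?thesis using dep_zero[OF rel c d] c by auto
            next
              assume z: "l 2 1 = 0" "l 2 3 = 0"
              have "\<forall>i<n. \<forall>j<n. 0 * X 1$$(i,j) + c 2 * X 2$$(i,j) + 0 * X 3$$(i,j) = 0"
                using E(2) z by simp
              note d = this
              show ?thesis using dep_zero[OF rel c d] c by auto
            next
              assume z: "l 3 1 = 0" "l 3 2 = 0"
              have "\<forall>i<n. \<forall>j<n. 0 * X 1$$(i,j) + 0 * X 2$$(i,j) + c 3 * X 3$$(i,j) = 0"
                using E(3) z by simp
              note d = this
              show ?thesis using dep_zero[OF rel c d] c by auto
            qed
          qed
        qed
      qed
    qed
    with nz show False by blast
  qed
qed

lemma cancel_l: "(k::'a::field)*x = k*y \<Longrightarrow> k \<noteq> 0 \<Longrightarrow> x = y" by simp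

lemma final_alg:
  fixes c1 c2 c3 l12 l13 l21 l23 l31 l32 :: "'a::field"
  assumes D: "l13*l21*l32 - l12*l23*l31 \<noteq> 0" and j1: "l12*l31*c2 - l21*l32*c1 = 0"
    and j2: "l12*l23*c3 - l13*l32*c2 = 0" and j3: "l23*l31*c1 - l13*l21*c3 = 0"
    and c: "c1 \<noteq> 0" "c2 \<noteq> 0" "c3 \<noteq> 0"
  shows "l12 \<noteq> 0 \<and> l13 \<noteq> 0 \<and> l21 \<noteq> 0 \<and> l23 \<noteq> 0 \<and> l31 \<noteq> 0 \<and> l32 \<noteq> 0 \<and>
     c2*l13 = -(c1*l23) \<and> c3*l21 = -(c2*l31) \<and> c3*l12 = -(c1*l32)"
proof -
  have n12: "l12 \<noteq> 0"
  proof
    assume z: "l12 = 0"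
    then have "l21*l32 = 0" using j1 c by simp
    then show False using D z by (auto simp: mult.assoc)
  qed
  have n13: "l13 \<noteq> 0"
  proof
    assume z: "l13 = 0"
    then have "l23*l31 = 0" using j3 c by simp
    then show False using D z by (auto simp: mult.assoc)
  qed
  have n21: "l21 \<noteq> 0"
  proof
    assume z: "l21 = 0"
    then have "l12*l31 = 0" using j1 c by simp
    then show False using D z by (auto simp: ac_simps)
  qed
  have n23: "l23 \<noteq> 0"
  proof
    assume z: "l23 = 0"
    then have "l13*l32 = 0" using j2 c by simp
    then show False using D z by (auto simp: ac_simps)
  qed
  have n31: "l31 \<noteq> 0"
  proof
    assume z: "l31 = 0"
    then have "l13*l21 = 0" using j3 c by simp
    then show False using D z by (auto simp: ac_simps)
  qed
  have n32: "l32 \<noteq> 0"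
  proof
    assume z: "l32 = 0"
    then have "l12*l23 = 0" using j2 c by simp
    then show False using D z by (auto simp: ac_simps)
  qed
  define P where "P = l12*l23*l31"
  define Q where "Q = l13*l21*l32"
  have e1: "l12*l31*c2 = l21*l32*c1" using j1 by simp
  have e2: "l12*l23*c3 = l13*l32*c2" using j2 by simp
  have e3: "l23*l31*c1 = l13*l21*c3" using j3 by simp
  have "(c1*c2*c3)*(P*P) = (l12*l31*c2)*(l12*l23*c3)*(l23*l31*c1)" unfolding P_def by (simp add: ac_simps)
  also have "\<dots> = (l21*l32*c1)*(l13*l32*c2)*(l13*l21*c3)" using e1 e2 e3 by simp
  also have "\<dots> = (c1*c2*c3)*(Q*Q)" unfolding Q_def by (simp add: ac_simps)
  finally have "P*P = Q*Q" using c by simp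
  then have "(P - Q)*(P + Q) = 0" by (simp add: algebra_simps)
  moreover have "P - Q \<noteq> 0" using D unfolding P_def Q_def by (simp add: algebra_simps)
  ultimately have PQ: "P = -Q" by (simp add: eq_neg_iff_add_eq_0)
  have "l12*l31*(c2*l13) = l13*(l12*l31*c2)" by (simp add: ac_simps)
  also have "\<dots> = l13*(l21*l32*c1)" using e1 by simp
  also have "\<dots> = c1*Q" unfolding Q_def by (simp add: ac_simps)
  also have "\<dots> = -(c1*P)" using PQ by simp
  also have "\<dots> = l12*l31*(-(c1*l23))" unfolding P_def by (simp add: ac_simps)
  finally have h: "l12*l31*(c2*l13) = l12*l31*(-(c1*l23))" .
  have r1: "c2*l13 = -(c1*l23)" using cancel_l[OF h] n12 n31 by simp
  have "l12*l23*(c3*l21) = l21*(l12*l23*c3)" by (simp add: ac_simps)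
  also have "\<dots> = l21*(l13*l32*c2)" using e2 by simp
  also have "\<dots> = c2*Q" unfolding Q_def by (simp add: ac_simps)
  also have "\<dots> = -(c2*P)" using PQ by simp
  also have "\<dots> = l12*l23*(-(c2*l31))" unfolding P_def by (simp add: ac_simps)
  finally have h: "l12*l23*(c3*l21) = l12*l23*(-(c2*l31))" .
  have r2: "c3*l21 = -(c2*l31)" using cancel_l[OF h] n12 n23 by simp
  have "l23*l31*(c3*l12) = c3*P" unfolding P_def by (simp add: ac_simps)
  also have "\<dots> = -(c3*Q)" using PQ by simp
  also have "\<dots> = -(l32*(l13*l21*c3))" unfolding Q_def by (simp add: ac_simps)
  also have "\<dots> = -(l32*(l23*l31*c1))" using e3 by simp
  also have "\<dots> = l23*l31*(-(c1*l32))" by (simp add: ac_simps)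
  finally have h: "l23*l31*(c3*l12) = l23*l31*(-(c1*l32))" .
  have r3: "c3*l12 = -(c1*l32)" using cancel_l[OF h] n23 n31 by simp
  show ?thesis using n12 n13 n21 n23 n31 n32 r1 r2 r3 by blast
qed

definition emb2 :: "nat \<Rightarrow> 'a::zero \<Rightarrow> 'a \<Rightarrow> 'a \<Rightarrow> 'a \<Rightarrow> 'a mat" where
  "emb2 n a b c d = mat n n (\<lambda>(i,j). if i=0 \<and> j=0 then a else if i=0 \<and> j=1 then b
      else if i=1 \<and> j=0 then c else if i=1 \<and> j=1 then d else 0)"

lemma emb2_carrier[simp]: "emb2 n a b c d \<in> carrier_mat n n"
  unfolding emb2_def by simp

lemma emb2_dims[simp]: "dim_row (emb2 n a b c d) = n" "dim_col (emb2 n a b c d) = n"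
  unfolding emb2_def by simp_all

lemma emb2_add: "emb2 n a b c d + emb2 n a' b' c' d' = emb2 n (a+a') (b+b') (c+c') (d+(d'::'a::monoid_add))"
  unfolding emb2_def by (rule eq_matI) auto

lemma emb2_minus: "emb2 n a b c d - emb2 n a' b' c' d' = emb2 n (a-a') (b-b') (c-c') (d-(d'::'a::ab_group_add))"
  unfolding emb2_def by (rule eq_matI) auto

lemma emb2_smult: "k \<cdot>\<^sub>m emb2 n a b c d = emb2 n (k*a) (k*b) (k*c) (k*(d::'a::semiring_0))"
  unfolding emb2_def by (rule eq_matI) auto

lemma emb2_zero_iff: assumes "2 \<le> n"
  shows "emb2 n a b c d = 0\<^sub>m n n \<longleftrightarrow> a=0 \<and> b=0 \<and> c=0 \<and> d=0"
proof
  assume h: "emb2 n a b c d = 0\<^sub>m n n"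
  have "emb2 n a b c d $$ (0,0) = 0" "emb2 n a b c d $$ (0,1) = 0" "emb2 n a b c d $$ (1,0) = 0" "emb2 n a b c d $$ (1,1) = 0"
    unfolding h using assms by auto
  then show "a=0 \<and> b=0 \<and> c=0 \<and> d=0" using assms unfolding emb2_def by auto
next
  assume "a=0 \<and> b=0 \<and> c=0 \<and> d=0"
  then show "emb2 n a b c d = 0\<^sub>m n n" unfolding emb2_def by (intro eq_matI) auto
qed

lemma sum_first2:
  fixes n :: nat and f :: "nat \<Rightarrow> 'a::comm_monoid_add"
  assumes "2 \<le> n" "\<And>k. 2 \<le> k \<Longrightarrow> k < n \<Longrightarrow> f k = 0"
  shows "sum f {0..<n} = f 0 + f 1"
proof -
  have "sum f {0..<n} = sum f {0..<2} + sum f {2..<n}"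
    using assms(1) sum.atLeastLessThan_concat[of 0 2 n f] by simp
  also have "sum f {2..<n} = 0" using assms(2) by (intro sum.neutral) auto
  also have "sum f {0..<2} = f 0 + f 1" by (simp add: numeral_2_eq_2)
  finally show ?thesis by simp
qed

lemma emb2_mult: assumes n: "2 \<le> n"
  shows "emb2 n a b c d * emb2 n a' b' c' d' = emb2 n (a*a'+b*c') (a*b'+b*d') (c*a'+d*c') (c*b'+(d::'a::comm_ring)*d')"
proof (rule eq_matI)
  fix i j assume ij: "i < dim_row (emb2 n (a*a'+b*c') (a*b'+b*d') (c*a'+d*c') (c*b'+d*d'))"
     "j < dim_col (emb2 n (a*a'+b*c') (a*b'+b*d') (c*a'+d*c') (c*b'+d*d'))"
  then have ij': "i < n" "j < n" by auto
  have "(emb2 n a b c d * emb2 n a' b' c' d') $$ (i,j) =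
     (\<Sum>k\<in>{0..<n}. emb2 n a b c d $$ (i,k) * emb2 n a' b' c' d' $$ (k,j))"
    using ij' by (simp add: scalar_prod_def)
  also have "\<dots> = emb2 n a b c d $$ (i,0) * emb2 n a' b' c' d' $$ (0,j) + emb2 n a b c d $$ (i,1) * emb2 n a' b' c' d' $$ (1,j)"
    by (rule sum_first2[OF n]) (use ij' in \<open>auto simp: emb2_def\<close>)
  also have "\<dots> = emb2 n (a*a'+b*c') (a*b'+b*d') (c*a'+d*c') (c*b'+d*d') $$ (i,j)"
    using ij' n unfolding emb2_def by auto
  finally show "(emb2 n a b c d * emb2 n a' b' c' d') $$ (i,j) = emb2 n (a*a'+b*c') (a*b'+b*d') (c*a'+d*c') (c*b'+d*d') $$ (i,j)" .
qed auto

lemma emb2_lie: assumes "2 \<le> n"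
  shows "lie_br (emb2 n a b c d) (emb2 n a' b' c' d') =
    emb2 n ((a*a'+b*c') - (a'*a+b'*c)) ((a*b'+b*d') - (a'*b+b'*d)) ((c*a'+d*c') - (c'*a+d'*c)) ((c*b'+(d::'a::comm_ring)*d') - (c'*b+d'*d))"
  unfolding lie_br_def emb2_mult[OF assms] emb2_minus ..

lemma construct:
  fixes c :: "nat \<Rightarrow> 'a::field" and l :: "nat \<Rightarrow> nat \<Rightarrow> 'a"
  assumes n: "2 \<le> n" and two: "(2::'a) \<noteq> 0" and c: "c 1 \<noteq> 0" "c 2 \<noteq> 0" "c 3 \<noteq> 0"
    and nz: "\<alpha> \<noteq> 0" "\<beta> \<noteq> 0" "\<gamma> \<noteq> 0"
    and L: "l 1 3 = \<alpha>*c 1" "l 2 3 = -(\<alpha>*c 2)" "l 2 1 = \<beta>*c 2" "l 3 1 = -(\<beta>*c 3)"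
      "l 1 2 = \<gamma>*c 1" "l 3 2 = -(\<gamma>*c 3)"
  shows "\<not> linking_algebra_FM n c l"
proof -
  define bb where "bb = 1/(4*\<beta>*\<gamma>)"
  define u where "u = 1/(2*\<alpha>)"
  define v where "v = \<beta>/\<alpha>"
  define w where "w = -(\<gamma>*bb/\<alpha>)"
  define X where "X = (\<lambda>i::nat. if i = 1 then emb2 n 0 1 0 0 else if i = 2 then emb2 n 0 0 bb 0
      else emb2 n u v w (-u))"
  have four: "(4::'a) \<noteq> 0" using two by (metis mult_eq_0_iff numeral_Bit0 one_add_one mult_2)
  have eight: "(8::'a) \<noteq> 0" using two four by (metis mult_eq_0_iff numeral_Bit0 mult_2)
  have au: "\<alpha>*u = 1/2" unfolding u_def using nz two by (simp add: field_simps)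
  have aw: "\<alpha>*w = -(\<gamma>*bb)" unfolding w_def using nz by (simp add: field_simps)
  have av: "\<alpha>*v = \<beta>" unfolding v_def using nz by (simp add: field_simps)
  have bgb: "\<beta>*\<gamma>*bb = 1/4" unfolding bb_def using nz four by (simp add: field_simps)
  have rel: "linking_rel_holds n c l X"
    unfolding linking_rel_holds_def X_def
    using L[simplified] nz c two four eight
    by (simp add: emb2_lie[OF n] emb2_smult emb2_add emb2_zero_iff[OF n] u_def v_def w_def bb_def field_simps)
  moreover have "X 1 \<noteq> 0\<^sub>m n n" unfolding X_def using emb2_zero_iff[OF n, of "0::'a" 1 0 0] by simp
  ultimately show ?thesis unfolding linking_algebra_FM_def by blast
qed

lemma c_nonzero:
  fixes qi :: nat
  assumes pr: "prime qi" and c1: "[qi = 1] (mod CARD('p::prime_card))"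
    and c2: "\<not> [qi = 1] (mod CARD('p)^2)"
  shows "(of_nat ((qi - 1) div CARD('p)) :: 'p mod_ring) \<noteq> 0"
proof
  assume h: "(of_nat ((qi - 1) div CARD('p)) :: 'p mod_ring) = 0"
  have q1: "qi \<ge> 1" using prime_gt_0_nat[OF pr] by linarith
  have d1: "CARD('p) dvd qi - 1" using c1 cong_altdef_nat[OF q1] by simp
  have d2: "CARD('p) dvd (qi - 1) div CARD('p)" using of_nat_0_mod_ring_dvd[OF h] .
  from d1 obtain k where k: "qi - 1 = CARD('p) * k" by blast
  have pos: "CARD('p) > 0" by simp
  have "(qi - 1) div CARD('p) = k" using k pos by simp
  with d2 have "CARD('p) dvd k" by simp
  then obtain m where "k = CARD('p) * m" by blast
  with k have "qi - 1 = CARD('p)^2 * m" by (simp add: power2_eq_square)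
  then have "CARD('p)^2 dvd qi - 1" by simp
  then have "[qi = 1] (mod CARD('p)^2)" using cong_altdef_nat[OF q1] by simp
  with c2 show False by simp
qed

lemma two_nonzero:
  assumes "odd CARD('p::prime_card)" shows "(2::'p mod_ring) \<noteq> 0"
proof
  assume h: "(2::'p mod_ring) = 0"
  have "(of_nat 2 :: 'p mod_ring) = 0" using h by simp
  then have "CARD('p) dvd 2" by (rule of_nat_0_mod_ring_dvd)
  moreover have "prime CARD('p)" by (rule prime_card)
  ultimately have "CARD('p) = 2" using dvd_imp_le[of "CARD('p)" 2] prime_ge_2_nat[of "CARD('p)"] by linarith
  with assms show False by simp
qed

theorem theorem1p7:
  fixes q :: "nat \<Rightarrow> nat" and g :: "nat \<Rightarrow> nat" and n :: nat
    and l :: "nat \<Rightarrow> nat \<Rightarrow> 'p::prime_card mod_ring"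
  defines "p \<equiv> CARD('p)"
  assumes p_odd: "odd p"
    and q_prime: "\<forall>i\<in>{1,2,3}. prime (q i)"
    and q_dist: "q 1 \<noteq> q 2" "q 1 \<noteq> q 3" "q 2 \<noteq> q 3"
    and q_cong1: "\<forall>i\<in>{1,2,3}. [q i = 1] (mod p)"
    and q_ncong2: "\<forall>i\<in>{1,2,3}. \<not> [q i = 1] (mod p^2)"
    and g_prim: "\<forall>j\<in>{1,2,3}. residue_primroot (q j) (g j)"
    and l_def: "\<forall>i\<in>{1,2,3}. \<forall>j\<in>{1,2,3}. i \<noteq> j \<longrightarrow>
                  (\<exists>e::nat. [q i * g j ^ e = 1] (mod q j) \<and> l i j = of_nat e)"
    and n_ge: "2 \<le> n" and n_lt: "n < p"
  shows "\<not> linking_algebra_FM n (\<lambda>i. of_nat ((q i - 1) div p)) l \<longleftrightarrow>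
           (\<forall>i\<in>{1,2,3}. \<forall>j\<in>{1,2,3}. i \<noteq> j \<longrightarrow> l i j \<noteq> 0) \<and>
           l 1 3 / of_nat ((q 1 - 1) div p) = - l 2 3 / of_nat ((q 2 - 1) div p) \<and>
           l 2 1 / of_nat ((q 2 - 1) div p) = - l 3 1 / of_nat ((q 3 - 1) div p) \<and>
           l 1 2 / of_nat ((q 1 - 1) div p) = - l 3 2 / of_nat ((q 3 - 1) div p)"
proof -
  define C where "C = (\<lambda>i. of_nat ((q i - 1) div p) :: 'p mod_ring)"
  have cz: "C i \<noteq> 0" if "i \<in> {1,2,3}" for i
    unfolding C_def p_def
    by (rule c_nonzero[OF q_prime[rule_format, OF that] q_cong1[rule_format, OF that, unfolded p_def]
          q_ncong2[rule_format, OF that, unfolded p_def]])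
  have cnz: "C 1 \<noteq> 0" "C 2 \<noteq> 0" "C 3 \<noteq> 0" using cz by simp_all
  have two: "(2::'p mod_ring) \<noteq> 0" using two_nonzero p_odd unfolding p_def by blast
  have eqv: "\<not> linking_algebra_FM n C l \<longleftrightarrow>
           (\<forall>i\<in>{1,2,3}. \<forall>j\<in>{1,2,3}. i \<noteq> j \<longrightarrow> l i j \<noteq> 0) \<and>
           l 1 3 / C 1 = - l 2 3 / C 2 \<and> l 2 1 / C 2 = - l 3 1 / C 3 \<and> l 1 2 / C 1 = - l 3 2 / C 3"
  proof
    assume "\<not> linking_algebra_FM n C l"
    then obtain X where rel: "linking_rel_holds n C l X" and nz: "\<not> (X 1 = 0\<^sub>m n n \<and> X 2 = 0\<^sub>m n n \<and> X 3 = 0\<^sub>m n n)"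
      unfolding linking_algebra_FM_def by auto
    have O: "l 1 3*l 2 1*l 3 2 - l 1 2*l 2 3*l 3 1 \<noteq> 0 \<and> l 1 2*l 3 1*C 2 - l 2 1*l 3 2*C 1 = 0
      \<and> l 1 2*l 2 3*C 3 - l 1 3*l 3 2*C 2 = 0 \<and> l 2 3*l 3 1*C 1 - l 1 3*l 2 1*C 3 = 0"
      by (rule only_if[OF rel cnz nz])
    have F: "l 1 2 \<noteq> 0 \<and> l 1 3 \<noteq> 0 \<and> l 2 1 \<noteq> 0 \<and> l 2 3 \<noteq> 0 \<and> l 3 1 \<noteq> 0 \<and> l 3 2 \<noteq> 0 \<and>
     C 2*l 1 3 = -(C 1*l 2 3) \<and> C 3*l 2 1 = -(C 2*l 3 1) \<and> C 3*l 1 2 = -(C 1*l 3 2)"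
      by (rule final_alg) (use O cnz in simp_all)
    show "(\<forall>i\<in>{1,2,3}. \<forall>j\<in>{1,2,3}. i \<noteq> j \<longrightarrow> l i j \<noteq> 0) \<and>
           l 1 3 / C 1 = - l 2 3 / C 2 \<and> l 2 1 / C 2 = - l 3 1 / C 3 \<and> l 1 2 / C 1 = - l 3 2 / C 3"
    proof (intro conjI)
      show "\<forall>i\<in>{1,2,3}. \<forall>j\<in>{1,2,3}. i \<noteq> j \<longrightarrow> l i j \<noteq> 0" using F by auto
      show "l 1 3 / C 1 = - l 2 3 / C 2" using F cnz by (simp add: divide_simps mult.commute)
      show "l 2 1 / C 2 = - l 3 1 / C 3" using F cnz by (simp add: divide_simps mult.commute)
      show "l 1 2 / C 1 = - l 3 2 / C 3" using F cnz by (simp add: divide_simps mult.commute)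
    qed
  next
    assume H: "(\<forall>i\<in>{1,2,3}. \<forall>j\<in>{1,2,3}. i \<noteq> j \<longrightarrow> l i j \<noteq> 0) \<and>
           l 1 3 / C 1 = - l 2 3 / C 2 \<and> l 2 1 / C 2 = - l 3 1 / C 3 \<and> l 1 2 / C 1 = - l 3 2 / C 3"
    have lnz: "l 1 3 \<noteq> 0" "l 2 1 \<noteq> 0" "l 1 2 \<noteq> 0" using H by auto
    show "\<not> linking_algebra_FM n C l"
    proof (rule construct[OF n_ge two cnz, of "l 1 3 / C 1" "l 2 1 / C 2" "l 1 2 / C 1"])
      show "l 1 3 / C 1 \<noteq> 0" "l 2 1 / C 2 \<noteq> 0" "l 1 2 / C 1 \<noteq> 0" using lnz cnz by auto
      show "l 1 3 = l 1 3 / C 1 * C 1" "l 2 1 = l 2 1 / C 2 * C 2" "l 1 2 = l 1 2 / C 1 * C 1"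
        using cnz by auto
      show "l 2 3 = - (l 1 3 / C 1 * C 2)" using H cnz by (simp add: field_simps)
      show "l 3 1 = - (l 2 1 / C 2 * C 3)" using H cnz by (simp add: field_simps)
      show "l 3 2 = - (l 1 2 / C 1 * C 3)" using H cnz by (simp add: field_simps)
    qed
  qed
  then show ?thesis unfolding C_def .
qed

end
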